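(* Let $d\ge1$, $\alpha>0$, $n\in\mathbb N$. There exists a constant $c<\infty$ depending only on $n,\alpha,d$ such that for every $\ell\in\mathbb N$, $$\sum{}^{*}\ e^{-|u_1-v_1|^\alpha-|u_2-v_2|^\alpha-\cdots-|u_{2n}-v_{2n}|^\alpha}\le c\,\ell^{nd},$$ where $\sum^*$ runs over all $(u_1,\dots,u_{2n},v_1,\dots,v_{2n})\in([-\ell,\ell]^d\cap\mathbb Z^d)^{4n}$ such that for each $i\in\{1,\dots,2n\}$ there exists $j\in\{1,\dots,2n\}$, $j\ne i$, with $\{u_i,v_i\}\cap\{u_j,v_j\}\ne\emptyset$.
   Context: $|\cdot|$ denotes the Euclidean norm. *)

theory Defs
  imports "HOL-Analysis.Analysis"
begin

definition lattice_box :: "nat \<Rightarrow> (real^'d) set" where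
  "lattice_box l = {x. \<forall>i. x $ i \<in> \<int> \<and> \<bar>x $ i\<bar> \<le> real l}"

end

theory Submission
  imports Defs "HOL-Real_Asymp.Real_Asymp"
begin


lemma sum_PiE_insert: "i \<notin> I \<Longrightarrow> (\<Sum>x\<in>PiE (insert i I) A. h x) = (\<Sum>p\<in>A i. \<Sum>y\<in>PiE I A. h (y(i:=p)))"
proof -
  assume i: "i \<notin> I"
  have "(\<Sum>x\<in>PiE (insert i I) A. h x) = (\<Sum>x\<in>(\<lambda>(y, g). g(i := y)) ` (A i \<times> PiE I A). h x)"
    by (simp add: PiE_insert_eq)
  also have "\<dots> = (\<Sum>x\<in>A i \<times> PiE I A. h (case x of (y, g) \<Rightarrow> g(i := y)))"
    by (subst sum.reindex[OF inj_combinator[OF i]]) (simp add: o_def)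
  also have "\<dots> = (\<Sum>p\<in>A i. \<Sum>y\<in>PiE I A. h (y(i:=p)))"
    unfolding sum.cartesian_product by (intro sum.cong refl) (simp split: prod.split)
  finally show ?thesis .
qed

definition pts :: "'a \<times> 'a \<Rightarrow> 'a set" where "pts p = {fst p, snd p}"

definition good :: "'i set \<Rightarrow> 'a set \<Rightarrow> ('i \<Rightarrow> 'a \<times> 'a) \<Rightarrow> bool" where
  "good I Q x \<longleftrightarrow> (\<forall>k\<in>I. pts (x k) \<inter> Q \<noteq> {} \<or> (\<exists>j\<in>I. j \<noteq> k \<and> pts (x k) \<inter> pts (x j) \<noteq> {}))"

definition FF :: "'a set \<Rightarrow> ('a \<times> 'a \<Rightarrow> real) \<Rightarrow> 'i set \<Rightarrow> 'a set \<Rightarrow> real" where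
  "FF B f I Q = (\<Sum>x\<in>PiE I (\<lambda>_. B \<times> B). if good I Q x then (\<Prod>k\<in>I. f (x k)) else 0)"

fun Kb :: "real \<Rightarrow> nat \<Rightarrow> nat \<Rightarrow> real" where
  "Kb S 0 q = 1"
| "Kb S (Suc 0) q = 2 * real q * S * Kb S 0 (q+2)"
| "Kb S (Suc (Suc m)) q = 2 * real q * S * Kb S (Suc m) (q+2) + real (Suc m) * (4 * S^2) * Kb S m (q+4)"

lemma good1: assumes g: "good I Q x" and i: "i \<in> I"
  shows "good (I - {i}) (Q \<union> pts (x i)) x"
  unfolding good_def
proof
  fix k assume k: "k \<in> I - {i}"
  then have "k \<in> I" by auto
  with g have "pts (x k) \<inter> Q \<noteq> {} \<or> (\<exists>j\<in>I. j \<noteq> k \<and> pts (x k) \<inter> pts (x j) \<noteq> {})"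
    unfolding good_def by blast
  then show "pts (x k) \<inter> (Q \<union> pts (x i)) \<noteq> {} \<or> (\<exists>j\<in>I - {i}. j \<noteq> k \<and> pts (x k) \<inter> pts (x j) \<noteq> {})"
  proof
    assume "pts (x k) \<inter> Q \<noteq> {}" then show ?thesis by blast
  next
    assume "\<exists>j\<in>I. j \<noteq> k \<and> pts (x k) \<inter> pts (x j) \<noteq> {}"
    then obtain j where j: "j \<in> I" "j \<noteq> k" "pts (x k) \<inter> pts (x j) \<noteq> {}" by blast
    show ?thesis
    proof (cases "j = i")
      case True then show ?thesis using j by blast
    next
      case False then show ?thesis using j by blast
    qed
  qed
qed

lemma good2: assumes g: "good I Q x" and i: "i \<in> I" and j: "j \<in> I"
  shows "good (I - {i} - {j}) (Q \<union> pts (x i) \<union> pts (x j)) x"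
  unfolding good_def
proof
  fix k assume k: "k \<in> I - {i} - {j}"
  then have "k \<in> I" by auto
  with g have "pts (x k) \<inter> Q \<noteq> {} \<or> (\<exists>j\<in>I. j \<noteq> k \<and> pts (x k) \<inter> pts (x j) \<noteq> {})"
    unfolding good_def by blast
  then show "pts (x k) \<inter> (Q \<union> pts (x i) \<union> pts (x j)) \<noteq> {} \<or> (\<exists>j'\<in>I - {i} - {j}. j' \<noteq> k \<and> pts (x k) \<inter> pts (x j') \<noteq> {})"
  proof
    assume "pts (x k) \<inter> Q \<noteq> {}" then show ?thesis by blast
  next
    assume "\<exists>j\<in>I. j \<noteq> k \<and> pts (x k) \<inter> pts (x j) \<noteq> {}"
    then obtain j' where j': "j' \<in> I" "j' \<noteq> k" "pts (x k) \<inter> pts (x j') \<noteq> {}" by blast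
    show ?thesis
    proof (cases "j' = i \<or> j' = j")
      case True then show ?thesis using j' by blast
    next
      case False then show ?thesis using j' by blast
    qed
  qed
qed

lemma good_upd: "i \<notin> I \<Longrightarrow> good I Q (y(i:=p)) = good I Q y"
  unfolding good_def by (intro ball_cong refl) (auto)

lemma card_pts: "card (pts p) \<le> 2"
  unfolding pts_def by (simp add: card_insert_le_m1)

lemma finite_pts[simp]: "finite (pts p)" by (simp add: pts_def)

lemma Kb_nonneg: "S \<ge> 0 \<Longrightarrow> Kb S m q \<ge> 0"
  by (induction S m q rule: Kb.induct) auto

locale wsys =
  fixes B :: "'a set" and f :: "'a \<times> 'a \<Rightarrow> real" and S :: real
  assumes finB: "finite B" and Bne: "B \<noteq> {}" and fnn: "\<And>p. f p \<ge> 0" and S0: "S \<ge> 0"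
    and row: "\<And>a. a \<in> B \<Longrightarrow> (\<Sum>b\<in>B. f (a,b)) \<le> S"
    and col: "\<And>b. b \<in> B \<Longrightarrow> (\<Sum>a\<in>B. f (a,b)) \<le> S"
begin

lemma peel:
  assumes "i \<notin> I" and fin: "finite I"
  shows "(\<Sum>x\<in>PiE (insert i I) (\<lambda>_. B \<times> B). if C (x i) x then (\<Prod>k\<in>insert i I. f (x k)) else 0)
       = (\<Sum>p\<in>B \<times> B. f p * (\<Sum>y\<in>PiE I (\<lambda>_. B \<times> B). if C p (y(i:=p)) then (\<Prod>k\<in>I. f (y k)) else 0))"
proof -
  have "(\<Sum>x\<in>PiE (insert i I) (\<lambda>_. B \<times> B). if C (x i) x then (\<Prod>k\<in>insert i I. f (x k)) else 0)
     = (\<Sum>p\<in>B \<times> B. \<Sum>y\<in>PiE I (\<lambda>_. B \<times> B). if C p (y(i:=p)) then (\<Prod>k\<in>insert i I. f ((y(i:=p)) k)) else 0)"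
    by (subst sum_PiE_insert[OF assms(1)]) simp
  also have "\<dots> = (\<Sum>p\<in>B \<times> B. \<Sum>y\<in>PiE I (\<lambda>_. B \<times> B). f p * (if C p (y(i:=p)) then (\<Prod>k\<in>I. f (y k)) else 0))"
  proof (intro sum.cong refl)
    fix p y assume y: "y \<in> PiE I (\<lambda>_. B \<times> B)"
    show "(if C p (y(i:=p)) then (\<Prod>k\<in>insert i I. f ((y(i:=p)) k)) else 0) = f p * (if C p (y(i:=p)) then (\<Prod>k\<in>I. f (y k)) else 0)"
    proof -
      have "(\<Prod>k\<in>insert i I. f ((y(i:=p)) k)) = f p * (\<Prod>k\<in>I. f ((y(i:=p)) k))"
        using fin assms(1) by (simp add: prod.insert)
      also have "(\<Prod>k\<in>I. f ((y(i:=p)) k)) = (\<Prod>k\<in>I. f (y k))"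
        using assms(1) by (intro prod.cong) auto
      finally show ?thesis by simp
    qed
  qed
  also have "\<dots> = (\<Sum>p\<in>B \<times> B. f p * (\<Sum>y\<in>PiE I (\<lambda>_. B \<times> B). if C p (y(i:=p)) then (\<Prod>k\<in>I. f (y k)) else 0))"
    by (simp add: sum_distrib_left)
  finally show ?thesis .
qed


lemma touch_sum:
  assumes "finite R"
  shows "(\<Sum>p\<in>B \<times> B. if pts p \<inter> R \<noteq> {} then f p else 0) \<le> 2 * real (card R) * S"
proof -
  have "(\<Sum>p\<in>B \<times> B. if pts p \<inter> R \<noteq> {} then f p else 0)
     \<le> (\<Sum>p\<in>B \<times> B. (if fst p \<in> R then f p else 0) + (if snd p \<in> R then f p else 0))"
    by (rule sum_mono) (auto simp: pts_def fnn)
  also have "\<dots> = (\<Sum>p\<in>B \<times> B. if fst p \<in> R then f p else 0) + (\<Sum>p\<in>B \<times> B. if snd p \<in> R then f p else 0)"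
    by (rule sum.distrib)
  also have "(\<Sum>p\<in>B \<times> B. if fst p \<in> R then f p else 0) = (\<Sum>a\<in>B. \<Sum>b\<in>B. if a \<in> R then f (a,b) else 0)"
    unfolding sum.cartesian_product by (intro sum.cong refl) (simp split: prod.split)
  also have "\<dots> = (\<Sum>a\<in>B \<inter> R. \<Sum>b\<in>B. f (a,b))"
    by (subst sum.inter_restrict[OF finB]) (intro sum.cong refl, simp)
  also have "\<dots> \<le> (\<Sum>a\<in>B \<inter> R. S)"
    by (rule sum_mono) (auto intro: row)
  also have "\<dots> \<le> real (card R) * S"
    using assms S0 by (simp add: card_mono mult_right_mono)
  also have "(\<Sum>p\<in>B \<times> B. if snd p \<in> R then f p else 0) = (\<Sum>a\<in>B. \<Sum>b\<in>B. if b \<in> R then f (a,b) else 0)"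
    unfolding sum.cartesian_product by (intro sum.cong refl) (simp split: prod.split)
  also have "\<dots> = (\<Sum>b\<in>B. \<Sum>a\<in>B. if b \<in> R then f (a,b) else 0)"
    by (rule sum.swap)
  also have "\<dots> = (\<Sum>b\<in>B \<inter> R. \<Sum>a\<in>B. f (a,b))"
    by (subst sum.inter_restrict[OF finB]) (intro sum.cong refl, simp)
  also have "\<dots> \<le> (\<Sum>b\<in>B \<inter> R. S)"
    by (rule sum_mono) (auto intro: col)
  also have "\<dots> \<le> real (card R) * S"
    using assms S0 by (simp add: card_mono mult_right_mono)
  finally show ?thesis by (simp add: ac_simps)
qed

lemma total_sum: "(\<Sum>p\<in>B \<times> B. f p) \<le> real (card B) * S"
proof -
  have "(\<Sum>p\<in>B \<times> B. f p) = (\<Sum>a\<in>B. \<Sum>b\<in>B. f (a,b))"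
    unfolding sum.cartesian_product by (intro sum.cong refl) (simp split: prod.split)
  also have "\<dots> \<le> (\<Sum>a\<in>B. S)"
    by (rule sum_mono) (auto intro: row)
  finally show ?thesis by simp
qed

lemma FF_nonneg: "FF B f I Q \<ge> 0"
  unfolding FF_def by (intro sum_nonneg) (auto intro: prod_nonneg fnn)

lemma main:
  "finite I \<Longrightarrow> card I = m \<Longrightarrow> finite Q \<Longrightarrow> card Q \<le> q \<Longrightarrow>
   FF B f I Q \<le> Kb S m q * real (card B) ^ (m div 2)"
proof (induction m arbitrary: I Q q rule: less_induct)
  case (less m)
  define N where "N = real (card B)"
  have N1: "N \<ge> 1" using finB Bne unfolding N_def by (simp add: Suc_leI card_gt_0_iff)
  show ?case
  proof (cases m)
    case 0
    then have "I = {}" using less.prems by auto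
    then show ?thesis by (simp add: FF_def good_def 0)
  next
    case (Suc m')
    then have "I \<noteq> {}" using less.prems by auto
    then obtain i where i: "i \<in> I" by auto
    define I' where "I' = I - {i}"
    have II': "I = insert i I'" "i \<notin> I'" "finite I'" "card I' = m'"
      using i less.prems Suc unfolding I'_def by auto
    define A where "A p x \<longleftrightarrow> pts p \<inter> Q \<noteq> {} \<and> good I' (Q \<union> pts p) x" for p x
    define Bj where "Bj j p x \<longleftrightarrow> pts (x j) \<inter> pts p \<noteq> {} \<and> good (I' - {j}) (Q \<union> pts p \<union> pts (x j)) x" for j p x
    have splt: "A (x i) x \<or> (\<exists>j\<in>I'. Bj j (x i) x)" if g: "good I Q x" for x
    proof (cases "pts (x i) \<inter> Q \<noteq> {}")
      case True
      have "good I' (Q \<union> pts (x i)) x"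
        using good1[OF g i] unfolding I'_def .
      then show ?thesis using True unfolding A_def by blast
    next
      case False
      then obtain j where j: "j \<in> I" "j \<noteq> i" "pts (x i) \<inter> pts (x j) \<noteq> {}"
        using g i unfolding good_def by blast
      have "good (I' - {j}) (Q \<union> pts (x i) \<union> pts (x j)) x"
        using good2[OF g i j(1)] unfolding I'_def .
      then have "Bj j (x i) x" using j unfolding Bj_def by (simp add: Int_commute)
      then show ?thesis using j unfolding I'_def by blast
    qed
    let ?P = "PiE I (\<lambda>_. B \<times> B)"
    define gx where "gx x = (\<Prod>k\<in>I. f (x k))" for x
    have gx0: "gx x \<ge> 0" for x unfolding gx_def by (intro prod_nonneg) (auto intro: fnn)
    have "FF B f I Q \<le> (\<Sum>x\<in>?P. (if A (x i) x then gx x else 0) + (\<Sum>j\<in>I'. if Bj j (x i) x then gx x else 0))"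
      unfolding FF_def gx_def[symmetric]
    proof (rule sum_mono)
      fix x assume "x \<in> ?P"
      have nn: "0 \<le> (\<Sum>j\<in>I'. if Bj j (x i) x then gx x else 0)"
        by (intro sum_nonneg) (auto intro: gx0)
      show "(if good I Q x then gx x else 0) \<le> (if A (x i) x then gx x else 0) + (\<Sum>j\<in>I'. if Bj j (x i) x then gx x else 0)"
      proof (cases "good I Q x")
        case True
        from splt[OF True] show ?thesis
        proof
          assume "A (x i) x" then show ?thesis using True nn by simp
        next
          assume "\<exists>j\<in>I'. Bj j (x i) x"
          then obtain j where j: "j \<in> I'" "Bj j (x i) x" by blast
          have "gx x = (if Bj j (x i) x then gx x else 0)" using j by simp
          also have "\<dots> \<le> (\<Sum>j\<in>I'. if Bj j (x i) x then gx x else 0)"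
            using j II' gx0 by (intro member_le_sum) auto
          finally show ?thesis using True gx0 nn by simp
        qed
      next
        case False then show ?thesis using nn gx0 by simp
      qed
    qed
    also have "\<dots> = (\<Sum>x\<in>?P. if A (x i) x then gx x else 0) + (\<Sum>j\<in>I'. \<Sum>x\<in>?P. if Bj j (x i) x then gx x else 0)"
      by (subst sum.distrib) (subst sum.swap, rule refl)
    finally have F1: "FF B f I Q \<le> \<dots>" .
    have IHA: "FF B f I' Q' \<le> Kb S m' q' * N ^ (m' div 2)" if "finite Q'" "card Q' \<le> q'" for Q' q'
      using less.IH[of m' I' Q' q'] Suc II' that N_def by simp
    define KA where "KA = Kb S m' (q+2) * N ^ (m' div 2)"
    have KA0: "KA \<ge> 0" using IHA[of Q "q+2"] FF_nonneg[of I' Q] less.prems unfolding KA_def by linarith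
    have SA: "(\<Sum>x\<in>?P. if A (x i) x then gx x else 0) \<le> 2 * real q * S * KA"
    proof -
      have "(\<Sum>x\<in>?P. if A (x i) x then gx x else 0)
          = (\<Sum>x\<in>PiE (insert i I') (\<lambda>_. B \<times> B). if A (x i) x then (\<Prod>k\<in>insert i I'. f (x k)) else 0)"
        by (simp only: gx_def II'(1)[symmetric])
      also have "\<dots> = (\<Sum>p\<in>B \<times> B. f p * (\<Sum>y\<in>PiE I' (\<lambda>_. B \<times> B). if A p (y(i:=p)) then (\<Prod>k\<in>I'. f (y k)) else 0))"
        by (rule peel[where C=A, OF II'(2) II'(3)])
      also have "\<dots> = (\<Sum>p\<in>B \<times> B. f p * (if pts p \<inter> Q \<noteq> {} then FF B f I' (Q \<union> pts p) else 0))"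
        unfolding A_def FF_def good_upd[OF II'(2)] by (intro sum.cong refl) auto
      also have "\<dots> \<le> (\<Sum>p\<in>B \<times> B. (if pts p \<inter> Q \<noteq> {} then f p else 0) * KA)"
      proof (rule sum_mono)
        fix p assume p: "p \<in> B \<times> B"
        have "card (Q \<union> pts p) \<le> q+2" using card_Un_le[of Q "pts p"] card_pts[of p] less.prems(4) by linarith
        then have "FF B f I' (Q \<union> pts p) \<le> KA" using IHA[of "Q \<union> pts p" "q+2"] less.prems(3) unfolding KA_def by simp
        then have "f p * FF B f I' (Q \<union> pts p) \<le> f p * KA" using fnn[of p] by (rule mult_left_mono)
        then show "f p * (if pts p \<inter> Q \<noteq> {} then FF B f I' (Q \<union> pts p) else 0) \<le> (if pts p \<inter> Q \<noteq> {} then f p else 0) * KA"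
          by (simp add: ac_simps)
      qed
      also have "\<dots> = (\<Sum>p\<in>B \<times> B. if pts p \<inter> Q \<noteq> {} then f p else 0) * KA"
        by (simp add: sum_distrib_right)
      also have "\<dots> \<le> (2 * real (card Q) * S) * KA"
        by (rule mult_right_mono[OF touch_sum[OF less.prems(3)] KA0])
      also have "\<dots> \<le> 2 * real q * S * KA"
        using less.prems(4) S0 KA0 by (intro mult_right_mono) auto
      finally show ?thesis .
    qed
    define KB where "KB = Kb S (m'-1) (q+4) * N ^ ((m'-1) div 2)"
    have SB: "(\<Sum>x\<in>?P. if Bj j (x i) x then gx x else 0) \<le> N * S * (4 * S * KB)" if j: "j \<in> I'" for j
    proof -
      define I'' where "I'' = I' - {j}"
      have I''p: "I' = insert j I''" "j \<notin> I''" "finite I''" "card I'' = m' - 1" "i \<notin> I''" "j \<noteq> i"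
        using j II' unfolding I''_def by auto
      have IHB: "FF B f I'' Q' \<le> Kb S (m'-1) q' * N ^ ((m'-1) div 2)" if "finite Q'" "card Q' \<le> q'" for Q' q'
        using less.IH[of "m'-1" I'' Q' q'] Suc I''p that N_def by simp
      have KB0: "KB \<ge> 0" using IHB[of Q "q+4"] FF_nonneg[of I'' Q] less.prems unfolding KB_def by linarith
      have inner: "(\<Sum>y\<in>PiE I' (\<lambda>_. B \<times> B). if Bj j p (y(i:=p)) then (\<Prod>k\<in>I'. f (y k)) else 0) \<le> 4 * S * KB" for p
      proof -
        define C2 where "C2 p' y \<longleftrightarrow> pts p' \<inter> pts p \<noteq> {} \<and> good I'' (Q \<union> pts p \<union> pts p') y" for p' y
        have "(\<Sum>y\<in>PiE I' (\<lambda>_. B \<times> B). if Bj j p (y(i:=p)) then (\<Prod>k\<in>I'. f (y k)) else 0)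
            = (\<Sum>y\<in>PiE (insert j I'') (\<lambda>_. B \<times> B). if C2 (y j) y then (\<Prod>k\<in>insert j I''. f (y k)) else 0)"
          unfolding I''p(1)[symmetric] using I''p(2-6) by (simp add: Bj_def C2_def good_upd I''_def[symmetric])
        also have "\<dots> = (\<Sum>p'\<in>B \<times> B. f p' * (\<Sum>z\<in>PiE I'' (\<lambda>_. B \<times> B). if C2 p' (z(j:=p')) then (\<Prod>k\<in>I''. f (z k)) else 0))"
          by (rule peel[where C=C2, OF I''p(2) I''p(3)])
        also have "\<dots> = (\<Sum>p'\<in>B \<times> B. f p' * (if pts p' \<inter> pts p \<noteq> {} then FF B f I'' (Q \<union> pts p \<union> pts p') else 0))"
          unfolding C2_def FF_def good_upd[OF I''p(2)] by (intro sum.cong refl) auto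
        also have "\<dots> \<le> (\<Sum>p'\<in>B \<times> B. (if pts p' \<inter> pts p \<noteq> {} then f p' else 0) * KB)"
        proof (rule sum_mono)
          fix p' assume p': "p' \<in> B \<times> B"
          have "card (Q \<union> pts p \<union> pts p') \<le> q+4"
            using card_Un_le[of "Q \<union> pts p" "pts p'"] card_Un_le[of Q "pts p"] card_pts[of p] card_pts[of p'] less.prems(4) by linarith
          then have "FF B f I'' (Q \<union> pts p \<union> pts p') \<le> KB" using IHB[of "Q \<union> pts p \<union> pts p'" "q+4"] less.prems(3) unfolding KB_def by simp
          then have "f p' * FF B f I'' (Q \<union> pts p \<union> pts p') \<le> f p' * KB" using fnn[of p'] by (rule mult_left_mono)
          then show "f p' * (if pts p' \<inter> pts p \<noteq> {} then FF B f I'' (Q \<union> pts p \<union> pts p') else 0) \<le> (if pts p' \<inter> pts p \<noteq> {} then f p' else 0) * KB"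
            by (simp add: ac_simps)
        qed
        also have "\<dots> = (\<Sum>p'\<in>B \<times> B. if pts p' \<inter> pts p \<noteq> {} then f p' else 0) * KB"
          by (simp add: sum_distrib_right)
        also have "\<dots> \<le> (2 * real (card (pts p)) * S) * KB"
          by (rule mult_right_mono[OF touch_sum[OF finite_pts] KB0])
        also have "\<dots> \<le> 4 * S * KB"
          using card_pts[of p] S0 KB0 by (intro mult_right_mono) auto
        finally show ?thesis .
      qed
      have "(\<Sum>x\<in>?P. if Bj j (x i) x then gx x else 0)
          = (\<Sum>x\<in>PiE (insert i I') (\<lambda>_. B \<times> B). if Bj j (x i) x then (\<Prod>k\<in>insert i I'. f (x k)) else 0)"
        by (simp only: gx_def II'(1)[symmetric])
      also have "\<dots> = (\<Sum>p\<in>B \<times> B. f p * (\<Sum>y\<in>PiE I' (\<lambda>_. B \<times> B). if Bj j p (y(i:=p)) then (\<Prod>k\<in>I'. f (y k)) else 0))"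
        by (rule peel[where C="Bj j", OF II'(2) II'(3)])
      also have "\<dots> \<le> (\<Sum>p\<in>B \<times> B. f p * (4 * S * KB))"
        by (intro sum_mono mult_left_mono inner fnn)
      also have "\<dots> = (\<Sum>p\<in>B \<times> B. f p) * (4 * S * KB)"
        by (simp add: sum_distrib_right)
      also have "\<dots> \<le> N * S * (4 * S * KB)"
        unfolding N_def using total_sum S0 KB0 by (intro mult_right_mono) auto
      finally show ?thesis .
    qed
    have "FF B f I Q \<le> 2 * real q * S * KA + (\<Sum>j\<in>I'. N * S * (4 * S * KB))"
    proof -
      have "(\<Sum>j\<in>I'. \<Sum>x\<in>?P. if Bj j (x i) x then gx x else 0) \<le> (\<Sum>j\<in>I'. N * S * (4 * S * KB))"
        by (rule sum_mono) (rule SB)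
      then show ?thesis using F1 SA by linarith
    qed
    also have "\<dots> = 2 * real q * S * KA + real m' * (N * S * (4 * S * KB))"
      using II'(4) by simp
    also have "\<dots> \<le> Kb S m q * N ^ (m div 2)"
    proof (cases m')
      case 0
      then show ?thesis using Suc unfolding KA_def by simp
    next
      case (Suc m'')
      have m: "m = Suc (Suc m'')" using Suc \<open>m = Suc m'\<close> by simp
      have "N ^ (Suc m'' div 2) \<le> N ^ (m div 2)" using N1 m by (intro power_increasing) auto
      then have "KA \<le> Kb S (Suc m'') (q+2) * N ^ (m div 2)"
        unfolding KA_def using Suc Kb_nonneg[OF S0] by (simp add: mult_left_mono)
      then have "2 * real q * S * KA \<le> 2 * real q * S * (Kb S (Suc m'') (q+2) * N ^ (m div 2))"
        using S0 by (intro mult_left_mono) auto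
      moreover have "real m' * (N * S * (4 * S * KB)) = real (Suc m'') * (4 * S^2) * Kb S m'' (q+4) * N ^ (m div 2)"
      proof -
        have pw: "N ^ (m div 2) = N * N ^ (m'' div 2)" using m by simp
        show ?thesis unfolding KB_def pw using Suc by (simp add: power2_eq_square ac_simps)
      qed
      moreover have "Kb S m q * N ^ (m div 2) = 2 * real q * S * (Kb S (Suc m'') (q+2) * N ^ (m div 2)) + real (Suc m'') * (4 * S^2) * Kb S m'' (q+4) * N ^ (m div 2)"
      proof -
        have "Kb S m q = 2 * real q * S * Kb S (Suc m'') (q+2) + real (Suc m'') * (4 * S^2) * Kb S m'' (q+4)"
          using m by simp
        then show ?thesis by (simp only: distrib_right mult.assoc)
      qed
      ultimately show ?thesis by linarith
    qed
    finally show ?thesis unfolding N_def .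
  qed
qed

end

lemma glue:
  fixes B :: "'a set" and w :: "'a \<Rightarrow> 'a \<Rightarrow> real" and M :: "'i set"
  assumes finB: "finite B" and finM: "finite M"
  shows "(\<Sum>(u, v) \<in> {(u, v). u \<in> PiE M (\<lambda>_. B) \<and> v \<in> PiE M (\<lambda>_. B)
            \<and> (\<forall>i\<in>M. \<exists>j\<in>M. j \<noteq> i \<and> {u i, v i} \<inter> {u j, v j} \<noteq> {})}. exp (- (\<Sum>i\<in>M. w (u i) (v i))))
       = FF B (\<lambda>p. exp (- w (fst p) (snd p))) M {}"
proof -
  define T where "T = {x \<in> PiE M (\<lambda>_. B \<times> B). good M {} x}"
  have "FF B (\<lambda>p. exp (- w (fst p) (snd p))) M {} = (\<Sum>x\<in>T. \<Prod>k\<in>M. exp (- w (fst (x k)) (snd (x k))))"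
    unfolding FF_def T_def using finB finM by (simp add: sum.inter_filter finite_PiE)
  also have "\<dots> = (\<Sum>(u, v) \<in> {(u, v). u \<in> PiE M (\<lambda>_. B) \<and> v \<in> PiE M (\<lambda>_. B)
            \<and> (\<forall>i\<in>M. \<exists>j\<in>M. j \<noteq> i \<and> {u i, v i} \<inter> {u j, v j} \<noteq> {})}. exp (- (\<Sum>i\<in>M. w (u i) (v i))))"
  proof (rule sum.reindex_bij_witness[where j = "\<lambda>x. (\<lambda>k. if k \<in> M then fst (x k) else undefined, \<lambda>k. if k \<in> M then snd (x k) else undefined)"
       and i = "\<lambda>(u,v). \<lambda>k. if k \<in> M then (u k, v k) else undefined"])
    fix x assume x: "x \<in> T"
    then have xP: "x \<in> PiE M (\<lambda>_. B \<times> B)" and g: "good M {} x" unfolding T_def by auto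
    show "(case (\<lambda>k. if k \<in> M then fst (x k) else undefined, \<lambda>k. if k \<in> M then snd (x k) else undefined) of
         (u, v) \<Rightarrow> \<lambda>k. if k \<in> M then (u k, v k) else undefined) = x"
      using xP by (auto simp: fun_eq_iff PiE_def extensional_def)
    show "(\<lambda>k. if k \<in> M then fst (x k) else undefined, \<lambda>k. if k \<in> M then snd (x k) else undefined)
          \<in> {(u, v). u \<in> PiE M (\<lambda>_. B) \<and> v \<in> PiE M (\<lambda>_. B) \<and> (\<forall>i\<in>M. \<exists>j\<in>M. j \<noteq> i \<and> {u i, v i} \<inter> {u j, v j} \<noteq> {})}"
      using xP g by (auto simp: PiE_def Pi_def extensional_def good_def pts_def mem_Times_iff)
    show "(case (\<lambda>k. if k \<in> M then fst (x k) else undefined, \<lambda>k. if k \<in> M then snd (x k) else undefined) of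
          (u, v) \<Rightarrow> exp (- (\<Sum>i\<in>M. w (u i) (v i)))) = (\<Prod>k\<in>M. exp (- w (fst (x k)) (snd (x k))))"
      using finM by (simp add: exp_sum[symmetric] sum_negf[symmetric])
  next
    fix a assume a: "a \<in> {(u, v). u \<in> PiE M (\<lambda>_. B) \<and> v \<in> PiE M (\<lambda>_. B) \<and> (\<forall>i\<in>M. \<exists>j\<in>M. j \<noteq> i \<and> {u i, v i} \<inter> {u j, v j} \<noteq> {})}"
    then obtain u v where a: "a = (u, v)" "u \<in> PiE M (\<lambda>_. B)" "v \<in> PiE M (\<lambda>_. B)" "\<forall>i\<in>M. \<exists>j\<in>M. j \<noteq> i \<and> {u i, v i} \<inter> {u j, v j} \<noteq> {}"
      by auto
    show "(\<lambda>k. if k \<in> M then fst ((case a of (u, v) \<Rightarrow> \<lambda>k. if k \<in> M then (u k, v k) else undefined) k) else undefined,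
           \<lambda>k. if k \<in> M then snd ((case a of (u, v) \<Rightarrow> \<lambda>k. if k \<in> M then (u k, v k) else undefined) k) else undefined) = a"
      using a by (auto simp: fun_eq_iff PiE_def extensional_def)
    show "(case a of (u, v) \<Rightarrow> \<lambda>k. if k \<in> M then (u k, v k) else undefined) \<in> T"
      using a unfolding T_def by (auto simp: PiE_def Pi_def extensional_def good_def pts_def)
  qed
  finally show ?thesis ..
qed



definition Zs :: "nat \<Rightarrow> real set" where "Zs l = {t. t \<in> \<int> \<and> \<bar>t\<bar> \<le> real l}"

lemma Zs_eq: "Zs l = real_of_int ` {-int l..int l}"
proof
  show "Zs l \<subseteq> real_of_int ` {-int l..int l}"
  proof
    fix t assume "t \<in> Zs l"
    then obtain k where k: "t = real_of_int k" "\<bar>t\<bar> \<le> real l" unfolding Zs_def by (auto elim: Ints_cases)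
    then have "k \<in> {-int l..int l}" by auto
    then show "t \<in> real_of_int ` {-int l..int l}" using k by auto
  qed
  show "real_of_int ` {-int l..int l} \<subseteq> Zs l" unfolding Zs_def by auto
qed

lemma finite_Zs: "finite (Zs l)" unfolding Zs_eq by simp

lemma card_Zs: "card (Zs l) = 2 * l + 1"
proof -
  have "card (Zs l) = card {-int l..int l}" unfolding Zs_eq by (rule card_image) (simp add: inj_on_def)
  also have "\<dots> = 2 * l + 1" by simp
  finally show ?thesis .
qed

lemma box_eq: "(lattice_box l :: (real^'d) set) = vec_lambda ` PiE UNIV (\<lambda>_. Zs l)"
proof
  show "(lattice_box l :: (real^'d) set) \<subseteq> vec_lambda ` PiE UNIV (\<lambda>_. Zs l)"
  proof
    fix x :: "real^'d" assume x: "x \<in> lattice_box l"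
    have "x = vec_lambda (\<lambda>i. x $ i)" by simp
    moreover have "(\<lambda>i. x $ i) \<in> PiE UNIV (\<lambda>_. Zs l)" using x unfolding lattice_box_def Zs_def by auto
    ultimately show "x \<in> vec_lambda ` PiE UNIV (\<lambda>_. Zs l)" by blast
  qed
  show "vec_lambda ` PiE UNIV (\<lambda>_. Zs l) \<subseteq> (lattice_box l :: (real^'d) set)"
    unfolding lattice_box_def Zs_def by auto
qed

lemma inj_vl: "inj_on (vec_lambda :: ('d::finite \<Rightarrow> real) \<Rightarrow> real^'d) A"
  by (rule inj_onI) (metis vec_lambda_inverse UNIV_I)

lemma finite_box: "finite (lattice_box l :: (real^'d) set)"
  unfolding box_eq by (intro finite_imageI finite_PiE) (auto simp: finite_Zs)

lemma card_box: "card (lattice_box l :: (real^'d) set) = (2 * l + 1) ^ CARD('d)"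
proof -
  have "card (lattice_box l :: (real^'d) set) = card (PiE (UNIV::'d set) (\<lambda>_. Zs l))"
    unfolding box_eq by (rule card_image[OF inj_vl])
  also have "\<dots> = (2 * l + 1) ^ CARD('d)" by (simp add: card_PiE card_Zs)
  finally show ?thesis .
qed

lemma zero_box: "0 \<in> (lattice_box l :: (real^'d) set)"
  unfolding lattice_box_def by simp

lemma summ:
  assumes a: "(a::real) > 0" and D: "D > 0"
  shows "summable (\<lambda>k::nat. exp (- (real k powr a) / D))"
proof (rule summable_comparison_test_ev[OF _ inverse_power_summable[of 2]])
  have "((\<lambda>k::nat. real k ^ 2 * exp (- (real k powr a) / D)) \<longlongrightarrow> 0) at_top"
    using a D by real_asymp
  then have "eventually (\<lambda>k::nat. real k ^ 2 * exp (- (real k powr a) / D) < 1) at_top"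
    by (rule order_tendstoD) simp
  then show "eventually (\<lambda>k. norm (exp (- (real k powr a) / D)) \<le> inverse (real k ^ 2)) sequentially"
    using eventually_gt_at_top[of "0::nat"]
  proof eventually_elim
    case (elim k)
    then have "exp (- (real k powr a) / D) \<le> 1 / real k ^ 2"
      by (simp add: field_simps)
    then show ?case by (simp add: divide_inverse)
  qed
qed simp


lemma one_dim:
  assumes a: "(a::real) > 0" and D: "D > 0" and U: "finite U" "U \<subseteq> \<int>"
  shows "(\<Sum>u\<in>U. exp (- (\<bar>u\<bar> powr a) / D)) \<le> 2 * suminf (\<lambda>k::nat. exp (- (real k powr a) / D))"
proof -
  define g where "g k = exp (- (real k powr a) / D)" for k :: nat
  define h where "h u = nat \<lfloor>\<bar>u\<bar>\<rfloor>" for u :: real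
  have sg: "summable g" unfolding g_def by (rule summ[OF a D])
  have hu: "real (h u) = \<bar>u\<bar>" if "u \<in> \<int>" for u
    using that unfolding h_def by (auto elim!: Ints_cases)
  have part: "(\<Sum>u\<in>V. exp (- (\<bar>u\<bar> powr a) / D)) \<le> suminf g"
    if V: "V \<subseteq> U" "inj_on abs V" for V
  proof -
    have inj: "inj_on h V"
    proof (rule inj_onI)
      fix u v assume uv: "u \<in> V" "v \<in> V" "h u = h v"
      then have "\<bar>u\<bar> = \<bar>v\<bar>" using hu[of u] hu[of v] V U by (metis subsetD)
      then show "u = v" using V(2) uv by (auto dest: inj_onD)
    qed
    have "(\<Sum>u\<in>V. exp (- (\<bar>u\<bar> powr a) / D)) = (\<Sum>u\<in>V. g (h u))"
      using V U hu unfolding g_def by (intro sum.cong refl) (metis subsetD)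
    also have "\<dots> = (\<Sum>k\<in>h ` V. g k)" by (simp add: sum.reindex[OF inj])
    also have "\<dots> \<le> suminf g"
      using sg V U by (intro sum_le_suminf) (auto intro: finite_subset simp: g_def[abs_def] simp del: minus_divide_left)
    finally show ?thesis .
  qed
  have "(\<Sum>u\<in>U. exp (- (\<bar>u\<bar> powr a) / D)) = (\<Sum>u\<in>U \<inter> {u. u \<ge> 0} \<union> U \<inter> {u. u < 0}. exp (- (\<bar>u\<bar> powr a) / D))"
    by (intro sum.cong refl) auto
  also have "\<dots> = (\<Sum>u\<in>U \<inter> {u. u \<ge> 0}. exp (- (\<bar>u\<bar> powr a) / D)) + (\<Sum>u\<in>U \<inter> {u. u < 0}. exp (- (\<bar>u\<bar> powr a) / D))"
    using U by (intro sum.union_disjoint) auto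
  also have "\<dots> \<le> suminf g + suminf g"
    by (intro add_mono part) (auto simp: inj_on_def)
  finally show ?thesis unfolding g_def by simp
qed

lemma claim1:
  fixes z :: "real^'d" and a :: real
  assumes a: "a \<ge> 0"
  shows "exp (- (norm z powr a)) \<le> (\<Prod>i\<in>UNIV. exp (- (\<bar>z $ i\<bar> powr a) / real CARD('d)))"
proof -
  define D where "D = real CARD('d)"
  have D: "D > 0" unfolding D_def by simp
  have "(\<Sum>i\<in>UNIV. \<bar>z $ i\<bar> powr a) \<le> (\<Sum>i\<in>(UNIV::'d set). norm z powr a)"
    by (intro sum_mono powr_mono2 a component_le_norm_cart) auto
  also have "\<dots> = D * norm z powr a" unfolding D_def by simp
  finally have s: "(\<Sum>i\<in>UNIV. \<bar>z $ i\<bar> powr a) / D \<le> norm z powr a"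
    using D by (simp add: field_simps)
  have "(\<Prod>i\<in>UNIV. exp (- (\<bar>z $ i\<bar> powr a) / D)) = exp (\<Sum>i\<in>UNIV. - (\<bar>z $ i\<bar> powr a) / D)"
    by (simp add: exp_sum)
  also have "(\<Sum>i\<in>UNIV. - (\<bar>z $ i\<bar> powr a) / D) = - ((\<Sum>i\<in>UNIV. \<bar>z $ i\<bar> powr a) / D)"
    by (simp add: sum_negf sum_divide_distrib)
  finally show ?thesis using s unfolding D_def[symmetric] by simp
qed

lemma row:
  fixes x :: "real^'d" and a :: real
  assumes a: "a > 0" and x: "x \<in> lattice_box l"
  shows "(\<Sum>b\<in>lattice_box l. exp (- (norm (x - b) powr a)))
         \<le> (2 * suminf (\<lambda>k::nat. exp (- (real k powr a) / real CARD('d)))) ^ CARD('d)"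
proof -
  define D where "D = real CARD('d)"
  have D: "D > 0" unfolding D_def by simp
  define T where "T = suminf (\<lambda>k::nat. exp (- (real k powr a) / D))"
  define G where "G t = exp (- (\<bar>t\<bar> powr a) / D)" for t :: real
  have "(\<Sum>b\<in>lattice_box l. exp (- (norm (x - b) powr a))) \<le> (\<Sum>b\<in>lattice_box l. \<Prod>i\<in>UNIV. G (x $ i - b $ i))"
    unfolding G_def D_def by (intro sum_mono order.trans[OF claim1]) (use a in auto)
  also have "\<dots> = (\<Sum>\<phi>\<in>PiE UNIV (\<lambda>_. Zs l). \<Prod>i\<in>UNIV. G (x $ i - \<phi> i))"
    unfolding box_eq by (subst sum.reindex[OF inj_vl]) simp
  also have "\<dots> = (\<Prod>i\<in>UNIV. \<Sum>t\<in>Zs l. G (x $ i - t))"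
    by (rule prod_sum_PiE[symmetric]) (auto simp: finite_Zs)
  also have "\<dots> \<le> (\<Prod>i\<in>(UNIV::'d set). 2 * T)"
  proof (rule prod_mono)
    fix i :: 'd
    have xi: "x $ i \<in> \<int>" using x unfolding lattice_box_def by auto
    have "(\<Sum>t\<in>Zs l. G (x $ i - t)) = (\<Sum>u\<in>(\<lambda>t. x $ i - t) ` Zs l. G u)"
      by (rule sum.reindex[symmetric, unfolded o_def]) (simp add: inj_on_def)
    also have "\<dots> \<le> 2 * T"
      unfolding G_def T_def using xi
      by (intro one_dim a D finite_imageI finite_Zs) (auto simp: Zs_def)
    finally show "0 \<le> (\<Sum>t\<in>Zs l. G (x $ i - t)) \<and> (\<Sum>t\<in>Zs l. G (x $ i - t)) \<le> 2 * T"
      by (auto intro!: sum_nonneg simp: G_def)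
  qed
  also have "\<dots> = (2 * T) ^ CARD('d)" by simp
  finally show ?thesis unfolding T_def D_def .
qed


theorem lemmaA2:
  fixes \<alpha> :: real and n :: nat
  assumes "\<alpha> > 0"
  shows "\<exists>c::real. \<forall>l::nat. l \<ge> 1 \<longrightarrow>
    (\<Sum>(u, v) \<in> {(u, v). u \<in> (PiE {1..2*n} (\<lambda>_. (lattice_box l :: (real^'d) set)))
                      \<and> v \<in> (PiE {1..2*n} (\<lambda>_. (lattice_box l :: (real^'d) set)))
                      \<and> (\<forall>i\<in>{1..2*n}. \<exists>j\<in>{1..2*n}. j \<noteq> i \<and> {u i, v i} \<inter> {u j, v j} \<noteq> {})}.
        exp (- (\<Sum>i=1..2*n. norm (u i - v i) powr \<alpha>)))
    \<le> c * real l ^ (n * CARD('d))"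
proof -
  define T where "T = suminf (\<lambda>k::nat. exp (- (real k powr \<alpha>) / real CARD('d)))"
  define S where "S = (2 * T) ^ CARD('d)"
  define f where "f p = exp (- (norm (fst p - snd p) powr \<alpha>))" for p :: "(real^'d) \<times> (real^'d)"
  have T0: "T \<ge> 0" unfolding T_def
    by (intro suminf_nonneg summ[OF assms]) auto
  have S0: "S \<ge> 0" unfolding S_def using T0 by simp
  define c where "c = Kb S (2*n) 0 * 3 ^ (n * CARD('d))"
  show ?thesis
  proof (intro exI[of _ c] allI impI)
    fix l :: nat assume l: "l \<ge> 1"
    interpret W: wsys "lattice_box l :: (real^'d) set" f S
    proof
      show "finite (lattice_box l :: (real^'d) set)" by (rule finite_box)
      show "(lattice_box l :: (real^'d) set) \<noteq> {}" using zero_box by blast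
      show "\<And>p. 0 \<le> f p" unfolding f_def by simp
      show "0 \<le> S" by (rule S0)
      show "(\<Sum>b\<in>lattice_box l. f (a, b)) \<le> S" if "a \<in> (lattice_box l :: (real^'d) set)" for a
        using row[OF assms that] unfolding f_def S_def T_def by simp
      show "(\<Sum>a\<in>lattice_box l. f (a, b)) \<le> S" if "b \<in> (lattice_box l :: (real^'d) set)" for b
        using row[OF assms that] unfolding f_def S_def T_def by (simp add: norm_minus_commute)
    qed
    have eq: "(\<Sum>(u, v) \<in> {(u, v). u \<in> (PiE {1..2*n} (\<lambda>_. (lattice_box l :: (real^'d) set)))
                      \<and> v \<in> (PiE {1..2*n} (\<lambda>_. (lattice_box l :: (real^'d) set)))
                      \<and> (\<forall>i\<in>{1..2*n}. \<exists>j\<in>{1..2*n}. j \<noteq> i \<and> {u i, v i} \<inter> {u j, v j} \<noteq> {})}.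
        exp (- (\<Sum>i=1..2*n. norm (u i - v i) powr \<alpha>)))
        = FF (lattice_box l :: (real^'d) set) f {1..2*n} {}"
      using glue[OF finite_box, of "{1..2*n}" "\<lambda>a b. norm (a - b) powr \<alpha>" l] unfolding f_def by simp
    have m: "FF (lattice_box l :: (real^'d) set) f {1..2*n} {} \<le> Kb S (2*n) 0 * real (card (lattice_box l :: (real^'d) set)) ^ (2*n div 2)"
      by (rule W.main) auto
    have "real (card (lattice_box l :: (real^'d) set)) ^ (2*n div 2) = real (2*l+1) ^ (n * CARD('d))"
      by (simp add: card_box power_mult[symmetric] mult.commute)
    also have "\<dots> \<le> (3 * real l) ^ (n * CARD('d))"
      using l by (intro power_mono) auto
    also have "\<dots> = 3 ^ (n * CARD('d)) * real l ^ (n * CARD('d))"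
      by (simp add: power_mult_distrib)
    finally have cb: "real (card (lattice_box l :: (real^'d) set)) ^ (2*n div 2) \<le> 3 ^ (n * CARD('d)) * real l ^ (n * CARD('d))" .
    have K0: "Kb S (2*n) 0 \<ge> 0" by (rule Kb_nonneg[OF S0])
    have "Kb S (2*n) 0 * real (card (lattice_box l :: (real^'d) set)) ^ (2*n div 2) \<le> Kb S (2*n) 0 * (3 ^ (n * CARD('d)) * real l ^ (n * CARD('d)))"
      by (rule mult_left_mono[OF cb K0])
    also have "\<dots> = c * real l ^ (n * CARD('d))" unfolding c_def by simp
    finally show "(\<Sum>(u, v) \<in> {(u, v). u \<in> (PiE {1..2*n} (\<lambda>_. (lattice_box l :: (real^'d) set)))
                      \<and> v \<in> (PiE {1..2*n} (\<lambda>_. (lattice_box l :: (real^'d) set)))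
                      \<and> (\<forall>i\<in>{1..2*n}. \<exists>j\<in>{1..2*n}. j \<noteq> i \<and> {u i, v i} \<inter> {u j, v j} \<noteq> {})}.
        exp (- (\<Sum>i=1..2*n. norm (u i - v i) powr \<alpha>)))
    \<le> c * real l ^ (n * CARD('d))" using eq m by linarith
  qed
qed

end
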